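(* Let $X$ be sufficiently large. Suppose that $\delta \ge X^{-1/10}$ and $\theta\in\mathbb{R}$ satisfy $|\widehat{g_{X,\Box}}(\theta)| \ge \delta X$. Then there exists a natural number $q\ll (\log X)^2 \delta^{-4}$ such that \[\|q\theta\|_{\mathbb{R}/\mathbb{Z}}\ll (\log X)^2 \delta^{-4} X^{-1}.\] (Implied constants may depend on the fixed function $w$.)
   Context: Fix a smooth function $w:\mathbb{R}\to[0,1]$ supported on $[-1,1]$ with $w(x)\ge 1/2$ for $x\in[-1/2,1/2]$ and $|\widehat w(t)|\ll e^{-\sqrt{|t|}}$ for all $t\in\mathbb{R}$, where $\widehat w(t)=\int_{\mathbb R}w(x)e(-tx)\,dx$ and $e(s)=e^{2\pi i s}$. Define $g_{X,\Box}:\mathbb{Z}\to\mathbb{R}$ by $g_{X,\Box}(x)=t\,w(t^2/X)$ if $|x|=t^2$ with $t\in\mathbb{N}$, and $g_{X,\Box}(x)=0$ if $|x|$ is not a square. Let $\widehat{g_{X,\Box}}(\theta)=\sum_x g_{X,\Box}(x)e(-\theta x)$. $\|\cdot\|_{\mathbb R/\mathbb Z}$ is distance to the nearest integer. *)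

theory Defs
  imports "HOL-Analysis.Analysis"
begin

definition e :: "real \<Rightarrow> complex" where
  "e s = cis (2 * pi * s)"

definition smooth_real :: "(real \<Rightarrow> real) \<Rightarrow> bool" where
  "smooth_real f \<longleftrightarrow> (\<forall>k x. ((deriv ^^ k) f) differentiable (at x))"

definition fourier :: "(real \<Rightarrow> real) \<Rightarrow> real \<Rightarrow> complex" where
  "fourier w t = (LINT x|lborel. complex_of_real (w x) * e (- t * x))"

definition g_sq :: "(real \<Rightarrow> real) \<Rightarrow> real \<Rightarrow> int \<Rightarrow> real" where
  "g_sq w X x = (if \<exists>t::nat. \<bar>x\<bar> = int (t^2)
                 then (let t = (THE t::nat. \<bar>x\<bar> = int (t^2)) in real t * w (real (t^2) / X))
                 else 0)"

definition g_sq_hat :: "(real \<Rightarrow> real) \<Rightarrow> real \<Rightarrow> real \<Rightarrow> complex" where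
  "g_sq_hat w X \<theta> = (\<Sum>\<^sub>\<infinity>x\<in>(UNIV::int set). complex_of_real (g_sq w X x) * e (- \<theta> * of_int x))"

definition dist_Z :: "real \<Rightarrow> real" where
  "dist_Z x = (INF n\<in>(UNIV::int set). \<bar>x - of_int n\<bar>)"

end

theory Submission
  imports Defs
begin


definition dz :: "real \<Rightarrow> real" where "dz x = \<bar>x - of_int (round x)\<bar>"

lemma e_add: "e (x + y) = e x * e y"
  unfolding e_def by (simp add: distrib_left cis_mult)

lemma e_int: "e (of_int n) = 1"
  unfolding e_def by (rule cis_multiple_2pi) simp

lemma norm_e [simp]: "norm (e x) = 1"
  unfolding e_def by simp

lemma cnj_e: "cnj (e x) = e (- x)"
  unfolding e_def by (simp add: cis_cnj)

lemma e_pow: "e x ^ n = e (real n * x)"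
proof (induct n)
  case 0 then show ?case by (simp add: e_def)
next
  case (Suc n) then show ?case by (simp add: e_add[symmetric] algebra_simps)
qed

lemma dz_le: "dz x \<le> \<bar>x - of_int m\<bar>"
  unfolding dz_def by (rule round_diff_minimal)

lemma dist_Z_le: "dist_Z x \<le> \<bar>x - of_int m\<bar>"
  unfolding dist_Z_def
  by (rule cINF_lower) (auto intro: bdd_belowI[where m=0])

lemma poly_aux: fixes a :: real assumes "0 \<le> a" "a \<le> 8/5" shows "a * (1 - a^2/6) - a^4/24 \<ge> a/4"
proof -
  have "a*a \<le> (8/5)*(8/5)" using assms by (intro mult_mono) auto
  then have sq: "a^2 \<le> 64/25" by (simp add: power2_eq_square)
  have "a*a*a \<le> (8/5)*(8/5)*(8/5)" using assms \<open>a*a \<le> (8/5)*(8/5)\<close> by (intro mult_mono) auto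
  then have "a^3 \<le> 512/125" by (simp add: power3_eq_cube)
  moreover note sq
  ultimately have "3/4 - a^2/6 - a^3/24 \<ge> 0" by simp
  then have "a * (3/4 - a^2/6 - a^3/24) \<ge> 0" using assms by simp
  then show ?thesis by (simp add: algebra_simps power2_eq_square power3_eq_cube eval_nat_numeral)
qed

lemma sin_lower: fixes t :: real assumes "\<bar>t\<bar> \<le> 8/5" shows "\<bar>sin t\<bar> \<ge> \<bar>t\<bar> / 4"
proof -
  have b: "\<bar>sin t - (\<Sum>m<4. sin_coeff m * t ^ m)\<bar> \<le> inverse (fact 4) * \<bar>t\<bar> ^ 4"
    by (rule Maclaurin_sin_bound)
  have s: "(\<Sum>m<4. sin_coeff m * t ^ m) = t - t^3/6"
  proof -
    have "(\<Sum>m<4. sin_coeff m * t ^ m) = sin_coeff 0 * t^0 + sin_coeff 1 * t^1 + sin_coeff 2 * t^2 + sin_coeff 3 * t^3"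
      by (simp add: numeral_eq_Suc)
    moreover have "sin_coeff 0 = 0" "sin_coeff 1 = 1" "sin_coeff 2 = 0" "sin_coeff 3 = -1/6"
      by (simp_all add: sin_coeff_def fact_numeral)
    ultimately show ?thesis by simp
  qed
  have f4: "inverse (fact 4 :: real) = 1/24" by (simp add: fact_numeral)
  have b': "\<bar>sin t - (t - t^3/6)\<bar> \<le> \<bar>t\<bar>^4/24" using b s f4 by simp
  have 1: "\<bar>sin t\<bar> \<ge> \<bar>t - t^3/6\<bar> - \<bar>t\<bar>^4/24" using b' by (smt (verit))
  have "\<bar>t\<bar>*\<bar>t\<bar> \<le> (8/5)*(8/5)" using assms by (intro mult_mono) auto
  then have t2: "\<bar>t\<bar>^2 \<le> 64/25" by (simp add: power2_eq_square)
  have "t - t^3/6 = t * (1 - \<bar>t\<bar>^2/6)" by (simp add: power2_eq_square power3_eq_cube algebra_simps)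
  then have 2: "\<bar>t - t^3/6\<bar> = \<bar>t\<bar> * (1 - \<bar>t\<bar>^2/6)"
    using t2 by (simp add: abs_mult)
  show ?thesis using 1 2 poly_aux[of "\<bar>t\<bar>"] assms by simp
qed


lemma dz_nonneg: "dz x \<ge> 0" by (simp add: dz_def)

lemma dz_half: "dz x \<le> 1/2"
  unfolding dz_def using of_int_round_abs_le[of x] by (simp add: abs_minus_commute)

lemma e_minus_1: "norm (e x - 1) \<ge> dz x"
proof -
  define y where "y = x - of_int (round x)"
  have ey: "e x = e y"
    using e_add[of y "of_int (round x)"] e_int[of "round x"] by (simp add: y_def)
  have "norm (e y - 1) = 2 * \<bar>sin (2 * pi * y / 2)\<bar>"
    unfolding e_def cis_conv_exp by (rule dist_exp_i_1)
  also have "2 * pi * y / 2 = pi * y" by simp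
  finally have 1: "norm (e y - 1) = 2 * \<bar>sin (pi * y)\<bar>" .
  have yh: "\<bar>y\<bar> \<le> 1/2" using of_int_round_abs_le[of x] by (simp add: y_def abs_minus_commute)
  have "\<bar>pi * y\<bar> \<le> pi * (1/2)" using yh by (simp add: abs_mult)
  also have "\<dots> \<le> 8/5" using pi_approx by simp
  finally have "\<bar>sin (pi * y)\<bar> \<ge> \<bar>pi * y\<bar> / 4" by (rule sin_lower)
  then have "norm (e y - 1) \<ge> pi * \<bar>y\<bar> / 2" using 1 by (simp add: abs_mult)
  moreover have "pi * \<bar>y\<bar> / 2 \<ge> \<bar>y\<bar>" using pi_gt3 mult_right_mono[of 2 pi "\<bar>y\<bar>"] by simp
  ultimately show ?thesis using ey by (simp add: dz_def y_def)
qed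

lemma geom_bound:
  fixes A B :: int
  assumes "dz x > 0"
  shows "norm (\<Sum>s\<in>{A..B}. e (x * of_int s)) \<le> 2 / dz x"
proof (cases "A \<le> B")
  case False
  then show ?thesis using assms by simp
next
  case True
  define n where "n = nat (B - A + 1)"
  have img: "{A..B} = (\<lambda>k. A + int k) ` {..<n}"
  proof (rule set_eqI, rule iffI)
    fix s assume "s \<in> {A..B}"
    then have "s = A + int (nat (s - A))" "nat (s - A) < n" using True by (auto simp: n_def)
    then show "s \<in> (\<lambda>k. A + int k) ` {..<n}" by blast
  qed (auto simp: n_def)
  have inj: "inj_on (\<lambda>k. A + int k) {..<n}" by (auto simp: inj_on_def)
  have "(\<Sum>s\<in>{A..B}. e (x * of_int s)) = (\<Sum>k<n. e (x * of_int (A + int k)))"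
    unfolding img by (simp add: sum.reindex[OF inj])
  also have "\<dots> = (\<Sum>k<n. e (x * of_int A) * e x ^ k)"
    by (intro sum.cong refl) (simp add: e_pow e_add[symmetric] algebra_simps)
  also have "\<dots> = e (x * of_int A) * (\<Sum>k<n. e x ^ k)" by (simp add: sum_distrib_left)
  finally have eq: "(\<Sum>s\<in>{A..B}. e (x * of_int s)) = e (x * of_int A) * (\<Sum>k<n. e x ^ k)" .
  have d: "norm (e x - 1) \<ge> dz x" by (rule e_minus_1)
  then have ne: "e x \<noteq> 1" using assms by auto
  have "norm (\<Sum>k<n. e x ^ k) = norm ((1 - e x ^ n) / (1 - e x))"
    using ne by (simp add: sum_gp_strict)
  also have "\<dots> = norm (1 - e x ^ n) / norm (e x - 1)"
    by (simp add: norm_divide norm_minus_commute)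
  also have "\<dots> \<le> 2 / dz x"
  proof (rule frac_le)
    show "norm (1 - e x ^ n) \<le> 2"
      using norm_triangle_ineq4[of 1 "e x ^ n"] by (simp add: norm_power)
  qed (use assms d in auto)
  finally show ?thesis unfolding eq by (simp add: norm_mult)
qed


lemma weyl_diff:
  fixes M :: int and \<theta> :: real
  shows "norm (\<Sum>t\<in>{1..M}. e (\<theta> * of_int t ^ 2)) ^ 2 \<le>
    (\<Sum>h\<in>{1-M..M-1}. norm (\<Sum>s\<in>{s\<in>{1..M}. s + h \<in> {1..M}}. e ((2 * \<theta> * of_int h) * of_int s)))"
proof -
  define I where "I = {1..M}"
  define D where "D = {1-M..M-1}"
  define Z where "Z = (\<Sum>t\<in>I. e (\<theta> * of_int t ^ 2))"
  define F where "F = (\<lambda>s t::int. e (\<theta> * (of_int t ^ 2 - of_int s ^ 2)))"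
  have "Z * cnj Z = (\<Sum>t\<in>I. \<Sum>s\<in>I. e (\<theta> * of_int t ^ 2) * cnj (e (\<theta> * of_int s ^ 2)))"
    unfolding Z_def by (simp add: sum_product cnj_sum)
  also have "\<dots> = (\<Sum>s\<in>I. \<Sum>t\<in>I. F s t)"
    by (subst sum.swap) (simp add: F_def cnj_e e_add[symmetric] algebra_simps)
  also have "\<dots> = (\<Sum>s\<in>I. \<Sum>h\<in>D. (if s + h \<in> I then F s (s + h) else 0))"
  proof (rule sum.cong[OF refl])
    fix s assume s: "s \<in> I"
    have "(\<Sum>h\<in>D. (if s + h \<in> I then F s (s + h) else 0)) = (\<Sum>h\<in>{h\<in>D. s + h \<in> I}. F s (s + h))"
      by (simp add: sum.inter_filter[symmetric] D_def)
    also have "{h\<in>D. s + h \<in> I} = (\<lambda>t. t - s) ` I"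
    proof (rule set_eqI, rule iffI)
      fix h assume "h \<in> {h\<in>D. s + h \<in> I}"
      then have "s + h \<in> I" "h = (s + h) - s" by auto
      then show "h \<in> (\<lambda>t. t - s) ` I" by blast
    qed (use s in \<open>auto simp: I_def D_def\<close>)
    also have "(\<Sum>h\<in>(\<lambda>t. t - s) ` I. F s (s + h)) = (\<Sum>t\<in>I. F s t)"
      by (subst sum.reindex) (auto simp: inj_on_def)
    finally show "(\<Sum>t\<in>I. F s t) = (\<Sum>h\<in>D. (if s + h \<in> I then F s (s + h) else 0))" by simp
  qed
  also have "\<dots> = (\<Sum>h\<in>D. \<Sum>s\<in>I. (if s + h \<in> I then F s (s + h) else 0))"
    by (rule sum.swap)
  also have "\<dots> = (\<Sum>h\<in>D. e (\<theta> * of_int h ^ 2) * (\<Sum>s\<in>{s\<in>I. s + h \<in> I}. e ((2 * \<theta> * of_int h) * of_int s)))"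
  proof (rule sum.cong[OF refl])
    fix h
    have "(\<Sum>s\<in>I. (if s + h \<in> I then F s (s + h) else 0)) = (\<Sum>s\<in>{s\<in>I. s + h \<in> I}. F s (s + h))"
      by (simp add: sum.inter_filter[symmetric] I_def)
    also have "\<dots> = (\<Sum>s\<in>{s\<in>I. s + h \<in> I}. e (\<theta> * of_int h ^ 2) * e ((2 * \<theta> * of_int h) * of_int s))"
      by (intro sum.cong refl) (simp add: F_def e_add[symmetric] power2_eq_square algebra_simps)
    finally show "(\<Sum>s\<in>I. (if s + h \<in> I then F s (s + h) else 0)) = e (\<theta> * of_int h ^ 2) * (\<Sum>s\<in>{s\<in>I. s + h \<in> I}. e ((2 * \<theta> * of_int h) * of_int s))"
      by (simp add: sum_distrib_left)
  qed
  finally have eq: "Z * cnj Z = (\<Sum>h\<in>D. e (\<theta> * of_int h ^ 2) * (\<Sum>s\<in>{s\<in>I. s + h \<in> I}. e ((2 * \<theta> * of_int h) * of_int s)))" .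
  have "norm Z ^ 2 = norm (Z * cnj Z)" by (simp add: norm_mult power2_eq_square)
  also have "\<dots> \<le> (\<Sum>h\<in>D. norm (e (\<theta> * of_int h ^ 2) * (\<Sum>s\<in>{s\<in>I. s + h \<in> I}. e ((2 * \<theta> * of_int h) * of_int s))))"
    unfolding eq by (rule norm_sum)
  also have "\<dots> = (\<Sum>h\<in>D. norm (\<Sum>s\<in>{s\<in>I. s + h \<in> I}. e ((2 * \<theta> * of_int h) * of_int s)))"
    by (simp add: norm_mult)
  finally show ?thesis by (simp add: Z_def I_def D_def)
qed


lemma Tbound:
  fixes \<theta> :: real and M h :: int
  defines "T \<equiv> norm (\<Sum>s\<in>{s\<in>{1..M}. s + h \<in> {1..M}}. e ((2 * \<theta> * of_int h) * of_int s))"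
  shows "T \<le> of_int (max 0 M)" and "dz (2 * \<theta> * of_int h) > 0 \<Longrightarrow> T \<le> 2 / dz (2 * \<theta> * of_int h)"
proof -
  have "T \<le> (\<Sum>s\<in>{s\<in>{1..M}. s + h \<in> {1..M}}. norm (e ((2 * \<theta> * of_int h) * of_int s)))"
    unfolding T_def by (rule norm_sum)
  also have "\<dots> = real (card {s\<in>{1..M}. s + h \<in> {1..M}})" by simp
  also have "\<dots> \<le> real (card {1..M})" by (intro of_nat_mono card_mono) auto
  also have "\<dots> = of_int (max 0 M)" by simp
  finally show "T \<le> of_int (max 0 M)" .
next
  assume d: "dz (2 * \<theta> * of_int h) > 0"
  have "{s\<in>{1..M}. s + h \<in> {1..M}} = {max 1 (1 - h) .. min M (M - h)}" by auto
  then show "T \<le> 2 / dz (2 * \<theta> * of_int h)"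
    unfolding T_def using geom_bound[OF d] by simp
qed

lemma markov_step:
  fixes M N :: int and \<theta> \<eta> :: real
  assumes M1: "1 \<le> M" and MN: "M \<le> N" and eta: "\<eta> > 0"
    and big: "\<eta> * of_int N \<le> norm (\<Sum>t\<in>{1..M}. e (\<theta> * of_int t ^ 2))"
  shows "real (card {h\<in>{1-M..M-1}. dz (2 * \<theta> * of_int h) \<le> 8 / (\<eta>^2 * of_int N)}) \<ge> \<eta>^2 * of_int N / 2"
proof -
  define \<rho> where "\<rho> = 8 / (\<eta>^2 * of_int N)"
  define D where "D = {1-M..M-1}"
  define H where "H = {h\<in>D. dz (2 * \<theta> * of_int h) \<le> \<rho>}"
  define T where "T = (\<lambda>h. norm (\<Sum>s\<in>{s\<in>{1..M}. s + h \<in> {1..M}}. e ((2 * \<theta> * of_int h) * of_int s)))"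
  have N0: "of_int N > (0::real)" using M1 MN by simp
  have rho0: "\<rho> > 0" using N0 eta by (simp add: \<rho>_def)
  have "(\<eta> * of_int N)^2 \<le> norm (\<Sum>t\<in>{1..M}. e (\<theta> * of_int t ^ 2)) ^ 2"
    using big eta N0 by (intro power_mono) auto
  also have "\<dots> \<le> (\<Sum>h\<in>D. T h)" unfolding D_def T_def by (rule weyl_diff)
  also have "\<dots> \<le> (\<Sum>h\<in>D. (if h \<in> H then of_int N else 2 / \<rho>))"
  proof (rule sum_mono)
    fix h assume h: "h \<in> D"
    show "T h \<le> (if h \<in> H then of_int N else 2 / \<rho>)"
    proof (cases "h \<in> H")
      case True
      then show ?thesis using Tbound(1)[where \<theta>=\<theta> and M=M and h=h] M1 MN by (simp add: T_def)
    next
      case False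
      then have "dz (2 * \<theta> * of_int h) > \<rho>" using h by (auto simp: H_def)
      then have "T h \<le> 2 / dz (2 * \<theta> * of_int h)" "2 / dz (2 * \<theta> * of_int h) \<le> 2 / \<rho>"
        using Tbound(2)[where \<theta>=\<theta> and M=M and h=h] rho0 by (auto simp: T_def intro!: divide_left_mono)
      then show ?thesis using False by simp
    qed
  qed
  also have "\<dots> = real (card H) * of_int N + real (card (D - H)) * (2 / \<rho>)"
  proof -
    have "H \<subseteq> D" by (auto simp: H_def)
    then have "D \<inter> H = H" by blast
    then have "(\<Sum>h\<in>D. (if h \<in> H then of_int N else 2 / \<rho>)) = (\<Sum>h\<in>H. of_int N) + (\<Sum>h\<in>D - H. 2 / \<rho>)"
      by (simp add: sum.If_cases D_def Diff_eq)
    then show ?thesis by simp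
  qed
  also have "\<dots> \<le> real (card H) * of_int N + (2 * of_int N) * (2 / \<rho>)"
  proof -
    have "card (D - H) \<le> card D" by (intro card_mono) (auto simp: D_def)
    also have "card D = nat (2 * M - 1)" by (simp add: D_def)
    finally have "real (card (D - H)) \<le> 2 * of_int N" using MN M1 by linarith
    then show ?thesis using rho0 by (intro add_left_mono mult_right_mono) auto
  qed
  also have "(2 * of_int N) * (2 / \<rho>) = (\<eta> * of_int N)^2 / 2"
    using N0 eta by (simp add: \<rho>_def field_simps power2_eq_square)
  finally have "real (card H) * of_int N \<ge> (\<eta> * of_int N)^2 / 2" by simp
  then have "real (card H) * of_int N \<ge> (\<eta>^2 * of_int N / 2) * of_int N"
    by (simp add: power2_eq_square algebra_simps)
  then have "real (card H) \<ge> \<eta>^2 * of_int N / 2" using N0 by (simp add: mult_le_cancel_right)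
  then show ?thesis by (simp add: H_def D_def \<rho>_def)
qed


lemma int_interval_card:
  fixes c r :: real
  assumes "r \<ge> 0"
  shows "real (card {m::int. \<bar>of_int m - c\<bar> \<le> r}) \<le> 2 * r + 1"
proof -
  have sub: "{m::int. \<bar>of_int m - c\<bar> \<le> r} \<subseteq> {ceiling (c - r) .. floor (c + r)}"
    by (auto simp: abs_le_iff ceiling_le_iff le_floor_iff)
  have "card {m::int. \<bar>of_int m - c\<bar> \<le> r} \<le> card {ceiling (c - r) .. floor (c + r)}"
    by (rule card_mono[OF _ sub]) simp
  also have "\<dots> = nat (floor (c + r) + 1 - ceiling (c - r))" by simp
  finally have 1: "real (card {m::int. \<bar>of_int m - c\<bar> \<le> r}) \<le> real (nat (floor (c + r) + 1 - ceiling (c - r)))"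
    by linarith
  have "real (nat (floor (c + r) + 1 - ceiling (c - r))) \<le> 2 * r + 1"
  proof (cases "floor (c + r) + 1 - ceiling (c - r) \<ge> 0")
    case True
    then have "real (nat (floor (c + r) + 1 - ceiling (c - r))) = of_int (floor (c + r)) + 1 - of_int (ceiling (c - r))"
      by simp
    also have "\<dots> \<le> 2 * r + 1" using of_int_floor_le[of "c + r"] le_of_int_ceiling[of "c - r"] by linarith
    finally show ?thesis .
  next
    case False then show ?thesis using assms by simp
  qed
  with 1 show ?thesis by linarith
qed

lemma count_block:
  fixes q a u :: int and \<alpha> \<rho> :: real
  assumes q1: "q \<ge> 1" and cop: "coprime a q" and beta: "of_int (q - 1) * \<bar>of_int q * \<alpha> - of_int a\<bar> \<le> 1"
    and rho: "\<rho> \<ge> 0"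
  shows "real (card {h\<in>{u*q .. u*q+q-1}. dz (of_int h * \<alpha>) \<le> \<rho>}) \<le> 2 * of_int q * \<rho> + 3"
proof -
  define B where "B = {h\<in>{u*q .. u*q+q-1}. dz (of_int h * \<alpha>) \<le> \<rho>}"
  define \<phi> where "\<phi> = (\<lambda>h. (h - u*q) * a - q * round (of_int h * \<alpha>))"
  define c where "c = - of_int q * (of_int (u*q) * \<alpha>)"
  define r where "r = of_int q * \<rho> + 1"
  have inj: "inj_on \<phi> B"
  proof (rule inj_onI)
    fix h h' assume h: "h \<in> B" and h': "h' \<in> B" and eq: "\<phi> h = \<phi> h'"
    then have "((h - u*q) - (h' - u*q)) * a = q * (round (of_int h * \<alpha>) - round (of_int h' * \<alpha>))"
      by (simp add: \<phi>_def algebra_simps)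
    then have "q dvd ((h - u*q) - (h' - u*q)) * a" by simp
    then have "q dvd ((h - u*q) - (h' - u*q))" using cop
      by (simp add: coprime_commute coprime_dvd_mult_left_iff)
    moreover have "\<bar>(h - u*q) - (h' - u*q)\<bar> < q" using h h' by (auto simp: B_def)
    ultimately have "(h - u*q) - (h' - u*q) = 0"
    proof -
      fix x :: int assume "q dvd x" "\<bar>x\<bar> < q"
      show "x = 0"
      proof (rule ccontr)
        assume "x \<noteq> 0"
        then have "\<bar>q\<bar> \<le> \<bar>x\<bar>" using \<open>q dvd x\<close> by (rule dvd_imp_le_int)
        then show False using \<open>\<bar>x\<bar> < q\<close> q1 by simp
      qed
    qed
    then show "h = h'" by simp
  qed
  have img: "\<phi> ` B \<subseteq> {m::int. \<bar>of_int m - c\<bar> \<le> r}"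
  proof
    fix m assume "m \<in> \<phi> ` B"
    then obtain h where h: "h \<in> B" and m: "m = \<phi> h" by auto
    define j where "j = h - u*q"
    have j: "0 \<le> j" "j \<le> q - 1" using h by (auto simp: B_def j_def)
    define \<beta> where "\<beta> = of_int q * \<alpha> - of_int a"
    have key: "of_int m = of_int q * (of_int h * \<alpha> - of_int (round (of_int h * \<alpha>))) + c - of_int j * \<beta>"
      by (simp add: m \<phi>_def c_def \<beta>_def j_def algebra_simps)
    have t1: "\<bar>of_int q * (of_int h * \<alpha> - of_int (round (of_int h * \<alpha>)))\<bar> \<le> of_int q * \<rho>"
      using h q1 by (auto simp: B_def dz_def abs_mult)
    have "\<bar>of_int j * \<beta>\<bar> \<le> of_int (q - 1) * \<bar>\<beta>\<bar>"
      using j by (simp add: abs_mult mult_right_mono)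
    then have t2: "\<bar>of_int j * \<beta>\<bar> \<le> 1" using beta by (simp add: \<beta>_def)
    show "m \<in> {m::int. \<bar>of_int m - c\<bar> \<le> r}"
      using key t1 t2 by (simp add: r_def)
  qed
  have "card B = card (\<phi> ` B)" using inj by (simp add: card_image)
  also have "\<dots> \<le> card {m::int. \<bar>of_int m - c\<bar> \<le> r}"
  proof (rule card_mono[OF _ img])
    have "{m::int. \<bar>of_int m - c\<bar> \<le> r} \<subseteq> {ceiling (c - r) .. floor (c + r)}"
      by (auto simp: abs_le_iff ceiling_le_iff le_floor_iff)
    then show "finite {m::int. \<bar>of_int m - c\<bar> \<le> r}" by (rule finite_subset) simp
  qed
  finally have "real (card B) \<le> real (card {m::int. \<bar>of_int m - c\<bar> \<le> r})" by simp
  also have "\<dots> \<le> 2 * r + 1" by (rule int_interval_card) (use rho q1 in \<open>simp add: r_def\<close>)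
  finally show ?thesis by (simp add: B_def r_def)
qed


lemma l1: fixes N q :: int shows "q \<ge> 1 \<Longrightarrow> N < q * (N div q + 1)"
  by (smt (verit, ccfv_threshold) nonzero_mult_div_cancel_left zdiv_mono1)
lemma l2: fixes h q :: int shows "q \<ge> 1 \<Longrightarrow> q * (h div q) + q > h"
  by (smt (verit, del_insts) div_mod_decomp_int mult.commute pos_mod_bound)
lemma l4: fixes h q :: int shows "q \<ge> 1 \<Longrightarrow> (h div q) * q \<le> h"
  by (smt (verit) div_mod_decomp_int mod_int_pos_iff)
lemma l5: fixes N q :: int shows "q \<ge> 1 \<Longrightarrow> real_of_int (N div q) \<le> of_int N / of_int q"
  by (metis real_of_int_div4)

lemma div_lower_aux:
  fixes N q h :: int
  assumes "q \<ge> 1" "-N \<le> h" "N \<ge> 0"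
  shows "- (N div q) - 1 \<le> h div q"
proof -
  have "N < q * (N div q + 1)" using assms(1) by (rule l1)
  moreover have "q * (h div q) + q > h" using assms(1) by (rule l2)
  ultimately have "q * (h div q + 1) > q * (- (N div q) - 1)" using assms by (simp add: algebra_simps)
  then show ?thesis using assms(1) by simp
qed

lemma count_H:
  fixes N q a :: int and \<alpha> \<rho> :: real and H :: "int set"
  assumes N0: "N \<ge> 0" and q1: "q \<ge> 1" and cop: "coprime a q"
    and beta: "of_int (q - 1) * \<bar>of_int q * \<alpha> - of_int a\<bar> \<le> 1"
    and rho: "\<rho> \<ge> 0" and HN: "H \<subseteq> {-N..N}" and Hd: "\<And>h. h \<in> H \<Longrightarrow> dz (of_int h * \<alpha>) \<le> \<rho>"
  shows "real (card H) \<le> (2 * of_int N / of_int q + 2) * (2 * of_int q * \<rho> + 3)"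
proof -
  define U where "U = {- (N div q) - 1 .. N div q}"
  define B where "B = (\<lambda>u. {h\<in>{u*q .. u*q+q-1}. dz (of_int h * \<alpha>) \<le> \<rho>})"
  have sub: "H \<subseteq> (\<Union>u\<in>U. B u)"
  proof
    fix h assume h: "h \<in> H"
    define u where "u = h div q"
    have "u * q \<le> h" "h \<le> u * q + q - 1" using q1 l4[of q h] l2[of q h]
      by (simp_all add: u_def algebra_simps)
    moreover have "h \<le> N" using h HN by auto
    then have "u \<le> N div q" using q1 by (auto simp: u_def intro: zdiv_mono1)
    moreover have "- (N div q) - 1 \<le> u" using h HN q1 N0 div_lower_aux[of q N h] by (auto simp: u_def)
    ultimately show "h \<in> (\<Union>u\<in>U. B u)" using h Hd by (auto simp: U_def B_def)
  qed
  have finB: "finite (B u)" for u unfolding B_def by (rule finite_subset[of _ "{u*q..u*q+q-1}"]) auto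
  have "card H \<le> card (\<Union>u\<in>U. B u)" by (rule card_mono[OF _ sub]) (simp add: U_def finB)
  also have "\<dots> \<le> (\<Sum>u\<in>U. card (B u))" by (rule card_UN_le) (simp add: U_def)
  finally have "real (card H) \<le> (\<Sum>u\<in>U. real (card (B u)))" by (simp flip: of_nat_sum)
  also have "\<dots> \<le> (\<Sum>u\<in>U. 2 * of_int q * \<rho> + 3)"
    by (rule sum_mono) (unfold B_def, rule count_block[OF q1 cop beta rho])
  also have "\<dots> = real (card U) * (2 * of_int q * \<rho> + 3)" by simp
  also have "\<dots> \<le> (2 * of_int N / of_int q + 2) * (2 * of_int q * \<rho> + 3)"
  proof (rule mult_right_mono)
    have "card U = nat (2 * (N div q) + 2)" by (simp add: U_def)
    moreover have "N div q \<ge> 0" using N0 q1 by (simp add: pos_imp_zdiv_nonneg_iff)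
    ultimately have "real (card U) = 2 * of_int (N div q) + 2" by simp
    moreover have "of_int (N div q) \<le> of_int N / (of_int q :: real)"
      using q1 by (rule l5)
    ultimately show "real (card U) \<le> 2 * of_int N / of_int q + 2" by simp
  qed (use rho q1 in simp)
  finally show ?thesis .
qed


lemma weyl_core:
  fixes M N :: int and \<theta> \<eta> :: real
  assumes M1: "1 \<le> M" and MN: "M \<le> N" and eta: "\<eta> > 0" "\<eta> \<le> 1"
    and bigN: "\<eta>^4 * of_int N \<ge> 512"
    and big: "\<eta> * of_int N \<le> norm (\<Sum>t\<in>{1..M}. e (\<theta> * of_int t ^ 2))"
  shows "\<exists>q::nat. q > 0 \<and> real q \<le> 32 / \<eta>^2 \<and> dist_Z (real q * \<theta>) \<le> 2048 / (\<eta>^4 * of_int N ^ 2)"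
proof -
  define n where "n = (of_int N :: real)"
  have n0: "n > 0" using M1 MN by (simp add: n_def)
  define \<rho> where "\<rho> = 8 / (\<eta>^2 * n)"
  define H where "H = {h\<in>{1-M..M-1}. dz (2 * \<theta> * of_int h) \<le> \<rho>}"
  have cardH: "real (card H) \<ge> \<eta>^2 * n / 2"
    using markov_step[OF M1 MN eta(1) big] by (simp add: H_def \<rho>_def n_def)
  have e2: "\<eta>^2 \<le> 1" "\<eta>^2 > 0" "\<eta>^4 \<le> \<eta>^2" using eta by (simp_all add: power_le_one power_decreasing)
  have x512: "\<eta>^2 * n \<ge> 512"
  proof -
    have "\<eta>^4 * n \<le> \<eta>^2 * n" using e2 n0 by (simp add: mult_right_mono)
    then show ?thesis using bigN by (simp add: n_def)
  qed
  have n512: "n \<ge> 512" using x512 e2 n0 by (smt (verit) mult_le_cancel_right2)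
  define Q where "Q = \<eta>^4 * n^2 / 1024"
  have Qn: "Q \<ge> n / 2"
  proof -
    have "\<eta>^4 * n * n \<ge> 512 * n" using bigN n0 by (simp add: n_def)
    then show ?thesis by (simp add: Q_def power2_eq_square algebra_simps)
  qed
  then have Q2: "Q \<ge> 256" using n512 by simp
  define Q0 where "Q0 = nat (floor Q)"
  have Q0pos: "Q0 > 0" using Q2 by (simp add: Q0_def)
  have Q0ge: "real Q0 \<ge> Q / 2" using Q2 of_int_floor_le[of Q] by (simp add: Q0_def) linarith
  have Q0le: "real Q0 \<le> Q" using Q2 by (simp add: Q0_def)
  obtain a k where cop: "coprime a k" and k0: "0 < k" and kQ: "k \<le> int Q0"
    and approx: "\<bar>of_int k * (2 * \<theta>) - of_int a\<bar> < 1 / real Q0"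
    using Dirichlet_approx_coprime[OF Q0pos, of "2 * \<theta>"] by blast
  have beta: "of_int (k - 1) * \<bar>of_int k * (2 * \<theta>) - of_int a\<bar> \<le> 1"
  proof -
    have "of_int (k - 1) * \<bar>of_int k * (2 * \<theta>) - of_int a\<bar> \<le> real Q0 * (1 / real Q0)"
      using k0 kQ approx by (intro mult_mono) auto
    then show ?thesis using Q0pos by simp
  qed
  have rho0: "\<rho> \<ge> 0" using n0 eta by (simp add: \<rho>_def)
  have HN: "H \<subseteq> {-N..N}" using MN by (auto simp: H_def)
  have cardH2: "real (card H) \<le> (2 * n / of_int k + 2) * (2 * of_int k * \<rho> + 3)"
    using count_H[of N k a "2 * \<theta>" \<rho> H] MN M1 k0 cop beta rho0 HN
    by (auto simp: H_def n_def mult.commute coprime_commute)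
  define kk where "kk = (of_int k :: real)"
  have kk0: "kk \<ge> 1" using k0 by (simp add: kk_def)
  have kkQ: "kk \<le> Q" using kQ Q0le by (simp add: kk_def)
  have expand: "(2 * n / kk + 2) * (2 * kk * \<rho> + 3) = 4 * n * \<rho> + 6 * n / kk + 4 * kk * \<rho> + 6"
    using kk0 by (simp add: field_simps)
  have t1: "4 * n * \<rho> = 32 / \<eta>^2" using n0 eta by (simp add: \<rho>_def field_simps)
  have t1b: "32 / \<eta>^2 \<le> \<eta>^2 * n / 16"
  proof -
    have "512 \<le> \<eta>^4 * n" using bigN by (simp add: n_def)
    then have "512 \<le> \<eta>^2 * (\<eta>^2 * n)" by (simp add: power_add[symmetric] mult.assoc[symmetric] eval_nat_numeral)
    then show ?thesis using e2 by (simp add: field_simps)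
  qed
  have t2: "4 * kk * \<rho> \<le> \<eta>^2 * n / 32"
  proof -
    have "4 * kk * \<rho> \<le> 4 * Q * \<rho>" using kkQ rho0 by (simp add: mult_right_mono)
    also have "4 * Q * \<rho> = \<eta>^2 * n / 32"
      using n0 eta by (simp add: Q_def \<rho>_def field_simps power2_eq_square eval_nat_numeral)
    finally show ?thesis .
  qed
  have "\<eta>^2 * n / 2 \<le> 4 * n * \<rho> + 6 * n / kk + 4 * kk * \<rho> + 6"
    using cardH cardH2 expand by (simp add: kk_def)
  then have "\<eta>^2 * n * (3/8) \<le> 6 * n / kk" using t1 t1b t2 x512 by linarith
  then have "\<eta>^2 * n * (3/8) * kk \<le> 6 * n" using kk0 by (simp add: field_simps)
  then have "\<eta>^2 * kk \<le> 16" using n0 by (simp add: field_simps)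
  then have kb: "kk \<le> 16 / \<eta>^2" using e2 by (simp add: field_simps)
  show ?thesis
  proof (intro exI conjI)
    show "0 < nat (2 * k)" using k0 by simp
    show "real (nat (2 * k)) \<le> 32 / \<eta>^2" using kb k0 by (simp add: kk_def)
    have "dist_Z (real (nat (2 * k)) * \<theta>) \<le> \<bar>real (nat (2 * k)) * \<theta> - of_int a\<bar>" by (rule dist_Z_le)
    also have "\<dots> = \<bar>of_int k * (2 * \<theta>) - of_int a\<bar>" using k0 by simp
    also have "\<dots> \<le> 1 / real Q0" using approx by simp
    also have "\<dots> \<le> 2 / Q" using Q0ge Q2 by (simp add: field_simps)
    also have "\<dots> = 2048 / (\<eta>^4 * of_int N ^ 2)" by (simp add: Q_def n_def)
    finally show "dist_Z (real (nat (2 * k)) * \<theta>) \<le> 2048 / (\<eta>^4 * of_int N ^ 2)" .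
  qed
qed



lemma the_sq: "(THE s::nat. \<bar>x\<bar> = int (s^2)) = t" if "\<bar>x\<bar> = int (t^2)"
proof (rule the_equality)
  show "\<bar>x\<bar> = int (t^2)" by fact
  fix s :: nat assume "\<bar>x\<bar> = int (s^2)"
  then have "s^2 = t^2" using that by simp
  then show "s = t" by (simp add: power2_eq_iff_nonneg)
qed

lemma g_sq_pos: "g_sq w X (int (t^2)) = real t * w (real (t^2) / X)"
proof -
  have ex: "\<exists>s::nat. \<bar>int (t^2)\<bar> = int (s^2)" by auto
  show ?thesis unfolding g_sq_def using ex the_sq[of "int (t^2)" t] by (simp add: Let_def)
qed

lemma g_sq_neg: "g_sq w X (- int (t^2)) = real t * w (real (t^2) / X)"
proof -
  have ex: "\<exists>s::nat. \<bar>- int (t^2)\<bar> = int (s^2)" by auto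
  show ?thesis unfolding g_sq_def using ex the_sq[of "- int (t^2)" t] by (simp add: Let_def)
qed

lemma g_sq_pos2: "g_sq w X ((int t)^2) = real t * w ((real t)^2 / X)"
  using g_sq_pos[of w X t] by simp

lemma g_sq_neg2: "g_sq w X (- ((int t)^2)) = real t * w ((real t)^2 / X)"
  using g_sq_neg[of w X t] by simp

lemma sq_neg_aux: fixes a b :: nat assumes h: "(int a)^2 = - ((int b)^2)" shows "a = 0"
proof -
  have "(int a)^2 \<ge> 0" "(int b)^2 \<ge> 0" by simp_all
  then have "(int a)^2 = 0" using h by linarith
  then show "a = 0" by simp
qed

lemma ghat_eq:
  fixes X \<theta> :: real and N :: nat
  assumes X0: "X > 0" and supp: "\<And>x. \<bar>x\<bar> > 1 \<Longrightarrow> w x = 0"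
    and NX: "\<And>t::nat. t > N \<Longrightarrow> real (t^2) > X" 
  shows "g_sq_hat w X \<theta> = (\<Sum>t\<in>{1..N}. complex_of_real (real t * w (real (t^2) / X)) * e (- (\<theta> * real (t^2))))
        + (\<Sum>t\<in>{1..N}. complex_of_real (real t * w (real (t^2) / X)) * e (\<theta> * real (t^2)))"
proof -
  define f where "f = (\<lambda>x::int. complex_of_real (g_sq w X x) * e (- \<theta> * of_int x))"
  define P where "P = (\<lambda>t::nat. int (t^2)) ` {1..N}"
  define Nn where "Nn = (\<lambda>t::nat. - int (t^2)) ` {1..N}"
  have zero: "f x = 0" if "x \<notin> P \<union> Nn" for x
  proof (cases "\<exists>t::nat. \<bar>x\<bar> = int (t^2)")
    case False then show ?thesis by (simp add: f_def g_sq_def)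
  next
    case True
    then obtain t :: nat where t: "\<bar>x\<bar> = int (t^2)" by blast
    have g: "g_sq w X x = real t * w (real (t^2) / X)"
      unfolding g_sq_def using True the_sq[OF t] by (simp add: Let_def)
    consider "t = 0" | "t > N" | "1 \<le> t \<and> t \<le> N" by linarith
    then show ?thesis
    proof cases
      case 1 then show ?thesis by (simp add: f_def g)
    next
      case 2
      then have "real (t^2) / X > 1" using NX[of t] X0 by simp
      then have "w (real (t^2) / X) = 0" using supp[of "real (t^2) / X"] X0 by simp
      then show ?thesis by (simp add: f_def g)
    next
      case 3
      then have "x = int (t^2) \<or> x = - int (t^2)" using t by auto
      then have "x \<in> P \<union> Nn" using 3 by (auto simp: P_def Nn_def)
      then show ?thesis using that by simp
    qed
  qed
  have fin: "finite (P \<union> Nn)" by (simp add: P_def Nn_def)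
  have "g_sq_hat w X \<theta> = infsum f UNIV" by (simp add: g_sq_hat_def f_def)
  also have "\<dots> = infsum f (P \<union> Nn)"
    by (rule infsum_cong_neutral) (use zero in auto)
  also have "\<dots> = sum f (P \<union> Nn)" using fin by simp
  also have "\<dots> = sum f P + sum f Nn"
    by (rule sum.union_disjoint) (auto simp: P_def Nn_def dest: sq_neg_aux)
  also have "sum f P = (\<Sum>t\<in>{1..N}. complex_of_real (real t * w (real (t^2) / X)) * e (- (\<theta> * real (t^2))))"
    unfolding P_def by (subst sum.reindex) (auto simp: inj_on_def f_def g_sq_pos2 power2_eq_iff_nonneg)
  also have "sum f Nn = (\<Sum>t\<in>{1..N}. complex_of_real (real t * w (real (t^2) / X)) * e (\<theta> * real (t^2)))"
    unfolding Nn_def by (subst sum.reindex) (auto simp: inj_on_def f_def g_sq_neg2 power2_eq_iff_nonneg)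
  finally show ?thesis .
qed



lemma abel_id:
  fixes a :: "nat \<Rightarrow> real" and z :: "nat \<Rightarrow> complex"
  shows "(\<Sum>t\<in>{1..n}. of_real (a t) * z t) =
    of_real (a n) * (\<Sum>s\<in>{1..n}. z s) + (\<Sum>t\<in>{1..<n}. of_real (a t - a (Suc t)) * (\<Sum>s\<in>{1..t}. z s))"
proof (induct n)
  case 0 then show ?case by simp
next
  case (Suc n)
  show ?case
  proof (cases "n = 0")
    case True then show ?thesis by simp
  next
    case False
    have s1: "{1..Suc n} = insert (Suc n) {1..n}" by auto
    have s2: "{1..<Suc n} = insert n {1..<n}" using False by auto
    show ?thesis
      unfolding s1 s2 using Suc by (simp add: algebra_simps)
  qed
qed

lemma abel_bound:
  fixes a :: "nat \<Rightarrow> real" and z :: "nat \<Rightarrow> complex"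
  assumes "\<And>k. k \<le> n \<Longrightarrow> norm (\<Sum>s\<in>{1..k}. z s) \<le> B"
  shows "norm (\<Sum>t\<in>{1..n}. of_real (a t) * z t) \<le> (\<bar>a n\<bar> + (\<Sum>t\<in>{1..<n}. \<bar>a t - a (Suc t)\<bar>)) * B"
proof -
  have B0: "B \<ge> 0" using assms[of 0] by simp
  have "norm (\<Sum>t\<in>{1..n}. of_real (a t) * z t) \<le>
     norm (of_real (a n) * (\<Sum>s\<in>{1..n}. z s)) + norm (\<Sum>t\<in>{1..<n}. of_real (a t - a (Suc t)) * (\<Sum>s\<in>{1..t}. z s))"
    unfolding abel_id by (rule norm_triangle_ineq)
  also have "\<dots> \<le> \<bar>a n\<bar> * B + (\<Sum>t\<in>{1..<n}. \<bar>a t - a (Suc t)\<bar> * B)"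
  proof (rule add_mono)
    show "norm (of_real (a n) * (\<Sum>s\<in>{1..n}. z s)) \<le> \<bar>a n\<bar> * B"
      using assms[of n] by (simp add: norm_mult mult_left_mono)
    have "norm (\<Sum>t\<in>{1..<n}. of_real (a t - a (Suc t)) * (\<Sum>s\<in>{1..t}. z s))
       \<le> (\<Sum>t\<in>{1..<n}. norm (of_real (a t - a (Suc t)) * (\<Sum>s\<in>{1..t}. z s)))" by (rule norm_sum)
    also have "\<dots> \<le> (\<Sum>t\<in>{1..<n}. \<bar>a t - a (Suc t)\<bar> * B)"
    proof (rule sum_mono)
      fix t assume t: "t \<in> {1..<n}"
      have "norm (of_real (a t - a (Suc t)) * (\<Sum>s\<in>{1..t}. z s)) = \<bar>a t - a (Suc t)\<bar> * norm (\<Sum>s\<in>{1..t}. z s)"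
        by (simp only: norm_mult norm_of_real)
      also have "\<dots> \<le> \<bar>a t - a (Suc t)\<bar> * B" using assms[of t] t by (intro mult_left_mono) auto
      finally show "norm (of_real (a t - a (Suc t)) * (\<Sum>s\<in>{1..t}. z s)) \<le> \<bar>a t - a (Suc t)\<bar> * B" .
    qed
    finally show "norm (\<Sum>t\<in>{1..<n}. of_real (a t - a (Suc t)) * (\<Sum>s\<in>{1..t}. z s)) \<le> (\<Sum>t\<in>{1..<n}. \<bar>a t - a (Suc t)\<bar> * B)" .
  qed
  also have "\<dots> = (\<bar>a n\<bar> + (\<Sum>t\<in>{1..<n}. \<bar>a t - a (Suc t)\<bar>)) * B"
    by (simp add: distrib_right sum_distrib_right)
  finally show ?thesis .
qed

lemma lipschitz01:
  assumes sm: "smooth_real w"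
  shows "\<exists>L\<ge>0. \<forall>x y. 0 \<le> x \<longrightarrow> x \<le> 1 \<longrightarrow> 0 \<le> y \<longrightarrow> y \<le> 1 \<longrightarrow> \<bar>w x - w y\<bar> \<le> L * \<bar>x - y\<bar>"
proof -
  have d0: "w differentiable (at x)" for x using sm unfolding smooth_real_def by (metis funpow_0)
  have d1: "deriv w differentiable (at x)" for x
  proof -
    have "((deriv ^^ 1) w) differentiable (at x)" using sm unfolding smooth_real_def by blast
    then show ?thesis by simp
  qed
  have cont: "isCont (\<lambda>x. \<bar>deriv w x\<bar>) x" for x
    using d1[of x] by (intro continuous_intros differentiable_imp_continuous_within)
  obtain L where L: "\<And>x. 0 \<le> x \<and> x \<le> 1 \<Longrightarrow> \<bar>deriv w x\<bar> \<le> L"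
    using isCont_bounded[of 0 1 "\<lambda>x. \<bar>deriv w x\<bar>"] cont by auto
  have L0: "L \<ge> 0" using L[of 0] by simp
  have der: "DERIV w x :> deriv w x" for x using d0[of x] by (simp add: DERIV_deriv_iff_real_differentiable)
  have main: "\<bar>w y - w x\<bar> \<le> L * \<bar>y - x\<bar>" if "0 \<le> x" "x < y" "y \<le> 1" for x y
  proof -
    obtain c where c: "x < c" "c < y" "w y - w x = (y - x) * deriv w c"
      using MVT2[of x y w "deriv w"] der \<open>x < y\<close> by blast
    have "\<bar>deriv w c\<bar> \<le> L" using L[of c] c that by auto
    then show ?thesis using c that by (simp add: abs_mult mult.commute mult_left_mono)
  qed
  show ?thesis
  proof (intro exI conjI allI impI)
    fix x y :: real assume "0 \<le> x" "x \<le> 1" "0 \<le> y" "y \<le> 1"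
    then consider "x < y" | "y < x" | "x = y" by linarith
    then show "\<bar>w x - w y\<bar> \<le> L * \<bar>x - y\<bar>"
    proof cases
      case 1 then show ?thesis using main[of x y] \<open>0 \<le> x\<close> \<open>y \<le> 1\<close> by (simp add: abs_minus_commute)
    next
      case 2 then show ?thesis using main[of y x] \<open>0 \<le> y\<close> \<open>x \<le> 1\<close> by simp
    qed simp
  qed (rule L0)
qed



lemma sum_nat_int:
  fixes f :: "int \<Rightarrow> 'a::comm_monoid_add"
  shows "(\<Sum>t\<in>{1..int M}. f t) = (\<Sum>t\<in>{1..M}. f (int t))"
proof -
  have "{1..int M} = int ` {1..M}" by (simp add: image_int_atLeastAtMost)
  then show ?thesis by (simp add: sum.reindex)
qed

theorem lemma5p4:
  fixes w :: "real \<Rightarrow> real"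
  assumes smooth: "smooth_real w"
    and range01: "\<And>x. 0 \<le> w x \<and> w x \<le> 1"
    and supp: "\<And>x. \<bar>x\<bar> > 1 \<Longrightarrow> w x = 0"
    and lower: "\<And>x. \<bar>x\<bar> \<le> 1/2 \<Longrightarrow> w x \<ge> 1/2"
    and decay: "\<exists>C. \<forall>t. norm (fourier w t) \<le> C * exp (- sqrt \<bar>t\<bar>)"
  shows "\<exists>C X0. \<forall>X \<delta> \<theta>. X \<ge> X0 \<longrightarrow> \<delta> \<ge> X powr (-1/10) \<longrightarrow>
            norm (g_sq_hat w X \<theta>) \<ge> \<delta> * X \<longrightarrow>
            (\<exists>q::nat. q > 0 \<and> real q \<le> C * (ln X)^2 * \<delta> powr (-4) \<and>
                dist_Z (real q * \<theta>) \<le> C * (ln X)^2 * \<delta> powr (-4) / X)"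
proof -
  obtain L where L0: "L \<ge> 0" and Lip: "\<And>x y. 0 \<le> x \<Longrightarrow> x \<le> 1 \<Longrightarrow> 0 \<le> y \<Longrightarrow> y \<le> 1 \<Longrightarrow> \<bar>w x - w y\<bar> \<le> L * \<bar>x - y\<bar>"
    using lipschitz01[OF smooth] by blast
  define K where "K = 2 * (3 * L + 2)"
  have K4: "K \<ge> 4" using L0 by (simp add: K_def)
  define C where "C = 8192 * K^4"
  define X0 where "X0 = max 16 ((1024 * K^4) powr 10)"
  show ?thesis
  proof (rule exI[of _ C], rule exI[of _ X0], intro allI impI)
    fix X \<delta> \<theta> :: real
    assume XX0: "X \<ge> X0" and dlow: "\<delta> \<ge> X powr (-1/10)" and ghat: "norm (g_sq_hat w X \<theta>) \<ge> \<delta> * X"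
    have X16: "X \<ge> 16" using XX0 by (simp add: X0_def)
    then have Xpos[simp]: "X > 0" by simp
    have Xnn[simp]: "X \<ge> 0" using X16 by simp
    have Xne[simp]: "X \<noteq> 0" using X16 by simp
    have "X powr (-1/10) > 0" using Xpos by simp
    then have d0: "\<delta> > 0" using dlow by linarith
    define N where "N = nat (floor (sqrt X))"
    have sq4: "sqrt X \<ge> 4" using X16 real_sqrt_le_mono[of 16 X] by simp
    have fl0: "floor (sqrt X) \<ge> 0" using Xpos by simp
    have fl: "real N = of_int (floor (sqrt X))" unfolding N_def using fl0 by (metis of_int_of_nat_eq nat_0_le)
    have Nle: "real N \<le> sqrt X" using fl of_int_floor_le[of "sqrt X"] by simp
    have Ngt: "real N > sqrt X - 1" using fl real_of_int_floor_gt_diff_one[of "sqrt X"] by simp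
    then have Nge: "real N \<ge> sqrt X - 1" by simp
    have N1: "N \<ge> 1" using Nge sq4 by linarith
    have "real N ^ 2 \<le> (sqrt X)^2" using Nle by (intro power_mono) auto
    then have NX: "real N ^ 2 \<le> X" using Xpos by simp
    have Nhalf: "real N \<ge> sqrt X / 2" using Nge sq4 by linarith
    have NX4: "real N ^ 2 \<ge> X / 4"
    proof -
      have "(sqrt X / 2)^2 \<le> real N ^ 2" using Nhalf sq4 Xpos by (intro power_mono) auto
      then show ?thesis using Xpos by (simp add: power_divide)
    qed
    have tbig: "real (t^2) > X" if "t > N" for t :: nat
    proof -
      have "real t \<ge> real N + 1" using that by simp
      moreover have "real N + 1 > sqrt X" using Ngt by linarith
      ultimately have "real t > sqrt X" by linarith
      then have "(real t)^2 > (sqrt X)^2" using sq4 by (intro power_strict_mono) auto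
      then show ?thesis using Xpos by simp
    qed
    define a where "a = (\<lambda>t::nat. real t * w (real (t^2) / X))"
    define S where "S = (\<Sum>t\<in>{1..N}. complex_of_real (a t) * e (\<theta> * real (t^2)))"
    have G: "g_sq_hat w X \<theta> = (\<Sum>t\<in>{1..N}. complex_of_real (real t * w (real (t^2) / X)) * e (- (\<theta> * real (t^2))))
        + (\<Sum>t\<in>{1..N}. complex_of_real (real t * w (real (t^2) / X)) * e (\<theta> * real (t^2)))"
      by (rule ghat_eq[OF Xpos supp tbig])
    have cS: "cnj S = (\<Sum>t\<in>{1..N}. complex_of_real (real t * w (real (t^2) / X)) * e (- (\<theta> * real (t^2))))"
      unfolding S_def a_def by (simp add: cnj_sum cnj_e del: of_real_mult)
    have S_eq: "S = (\<Sum>t\<in>{1..N}. complex_of_real (real t * w (real (t^2) / X)) * e (\<theta> * real (t^2)))"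
      unfolding S_def a_def by simp
    have geq: "g_sq_hat w X \<theta> = cnj S + S"
      unfolding G cS[symmetric] S_eq[symmetric] by (rule refl)
    have "\<delta> * X \<le> norm (cnj S + S)" using ghat geq by simp
    also have "\<dots> \<le> 2 * norm S" using norm_triangle_ineq[of "cnj S" S] by simp
    finally have Sbig: "norm S \<ge> \<delta> * X / 2" by simp
    have a_bd: "0 \<le> a t \<and> a t \<le> real t" for t
    proof -
      have w01: "0 \<le> w (real (t^2) / X)" "w (real (t^2) / X) \<le> 1" using range01 by auto
      have "0 \<le> a t" unfolding a_def using w01 by simp
      moreover have "a t \<le> real t" unfolding a_def by (rule mult_left_le) (use w01 in auto)
      ultimately show ?thesis by simp
    qed
    have "norm S \<le> (\<Sum>t\<in>{1..N}. norm (complex_of_real (a t) * e (\<theta> * real (t^2))))"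
      unfolding S_def by (rule norm_sum)
    also have "\<dots> \<le> (\<Sum>t\<in>{1..N}. real N)"
    proof (rule sum_mono)
      fix t assume t: "t \<in> {1..N}"
      have "norm (complex_of_real (a t) * e (\<theta> * real (t^2))) = \<bar>a t\<bar>" by (simp add: norm_mult)
      also have "\<dots> \<le> real t" using a_bd[of t] by simp
      also have "\<dots> \<le> real N" using t by simp
      finally show "norm (complex_of_real (a t) * e (\<theta> * real (t^2))) \<le> real N" .
    qed
    also have "\<dots> = real N ^ 2" by (simp add: power2_eq_square)
    finally have "norm S \<le> X" using NX by linarith
    then have "\<delta> * X \<le> 2 * X" using Sbig by linarith
    then have d2: "\<delta> \<le> 2" using Xpos by (simp add: mult_le_cancel_right)
    define Z where "Z = (\<lambda>k::nat. \<Sum>s\<in>{1..k}. e (\<theta> * real (s^2)))"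
    define B where "B = Max ((\<lambda>k. norm (Z k)) ` {..N})"
    have Bge: "norm (Z k) \<le> B" if "k \<le> N" for k unfolding B_def using that by (intro Max_ge) auto
    obtain M where MN: "M \<le> N" and BM: "B = norm (Z M)"
    proof -
      have "B \<in> (\<lambda>k. norm (Z k)) ` {..N}" unfolding B_def by (intro Max_in) auto
      then show ?thesis using that by auto
    qed
    have var: "\<bar>a t - a (Suc t)\<bar> \<le> 3 * L + 1" if t: "t \<in> {1..<N}" for t
    proof -
      have t1: "real t \<ge> 1" "Suc t \<le> N" using t by auto
      have "real (Suc t) ^ 2 \<le> real N ^ 2" using t1 by (intro power_mono) auto
      then have sx: "real (Suc t) ^ 2 \<le> X" using NX by linarith
      have "real t ^ 2 \<le> real (Suc t) ^ 2" by (intro power_mono) auto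
      then have tx: "real t ^ 2 \<le> X" using sx by linarith
      define u where "u = real (t^2) / X"
      define v where "v = real ((Suc t)^2) / X"
      have u01: "0 \<le> u" "u \<le> 1" using tx Xpos by (simp_all add: u_def)
      have v01: "0 \<le> v" "v \<le> 1" using sx Xpos by (simp_all add: v_def)
      have "\<bar>v - u\<bar> = (2 * real t + 1) / X" using Xpos by (simp add: u_def v_def field_simps power2_eq_square)
      then have lip: "\<bar>w u - w v\<bar> \<le> L * ((2 * real t + 1) / X)" using Lip[OF u01 v01] by (simp add: abs_minus_commute)
      have "a t - a (Suc t) = real t * (w u - w v) - w v" by (simp add: a_def u_def v_def algebra_simps)
      then have "\<bar>a t - a (Suc t)\<bar> \<le> \<bar>real t * (w u - w v)\<bar> + \<bar>w v\<bar>" using abs_triangle_ineq4 by simp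
      also have "\<bar>real t * (w u - w v)\<bar> = real t * \<bar>w u - w v\<bar>" by (simp add: abs_mult)
      finally have "\<bar>a t - a (Suc t)\<bar> \<le> real t * \<bar>w u - w v\<bar> + \<bar>w v\<bar>" .
      also have "\<dots> \<le> real t * (L * ((2 * real t + 1) / X)) + 1"
        using lip range01[of v] by (intro add_mono mult_left_mono) auto
      also have "real t * (L * ((2 * real t + 1) / X)) = L * ((2 * real t ^ 2 + real t) / X)"
        by (simp add: field_simps power2_eq_square)
      also have "\<dots> \<le> L * 3"
      proof (rule mult_left_mono[OF _ L0])
        have "real t \<le> real t ^ 2" using t1 by (simp add: power2_eq_square)
        then have "2 * real t ^ 2 + real t \<le> 3 * X" using tx by linarith
        then show "(2 * real t ^ 2 + real t) / X \<le> 3" using Xpos by (simp add: divide_le_eq)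
      qed
      finally show ?thesis by simp
    qed
    have "norm S \<le> (\<bar>a N\<bar> + (\<Sum>t\<in>{1..<N}. \<bar>a t - a (Suc t)\<bar>)) * B"
      unfolding S_def using abel_bound[of N "\<lambda>s. e (\<theta> * real (s^2))" B a] Bge by (simp add: Z_def)
    also have "\<dots> \<le> (real N + real N * (3 * L + 1)) * B"
    proof (rule mult_right_mono)
      have "(\<Sum>t\<in>{1..<N}. \<bar>a t - a (Suc t)\<bar>) \<le> (\<Sum>t\<in>{1..<N}. 3 * L + 1)" by (rule sum_mono) (rule var)
      also have "\<dots> = real (N - 1) * (3 * L + 1)" by simp
      also have "\<dots> \<le> real N * (3 * L + 1)" using L0 by (intro mult_right_mono) auto
      finally show "\<bar>a N\<bar> + (\<Sum>t\<in>{1..<N}. \<bar>a t - a (Suc t)\<bar>) \<le> real N + real N * (3 * L + 1)"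
        using a_bd[of N] by simp
      show "0 \<le> B" using Bge[of 0] by (simp add: Z_def)
    qed
    also have "\<dots> = real N * K / 2 * B" by (simp add: K_def algebra_simps)
    finally have SB: "norm S \<le> real N * K / 2 * B" .
    define \<eta> where "\<eta> = \<delta> / K"
    have eta0: "\<eta> > 0" using d0 K4 by (simp add: \<eta>_def)
    have eta1: "\<eta> \<le> 1" using d2 K4 by (simp add: \<eta>_def)
    have "\<delta> * real N ^ 2 / 2 \<le> \<delta> * X / 2" using NX d0 by simp
    also have "\<dots> \<le> real N * K / 2 * B" using Sbig SB by linarith
    finally have "\<delta> * real N ^ 2 / 2 \<le> real N * K / 2 * B" .
    then have "(\<eta> * real N) * (real N * K) \<le> B * (real N * K)"
      using K4 by (simp add: \<eta>_def power2_eq_square field_simps)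
    then have etaB: "\<eta> * real N \<le> B" using K4 N1 by (simp add: mult_le_cancel_right)
    have M1: "M \<ge> 1"
    proof (rule ccontr)
      assume "\<not> M \<ge> 1" then have "M = 0" by simp
      then have "B = 0" using BM by (simp add: Z_def)
      moreover have "\<eta> * real N > 0" using eta0 N1 by simp
      ultimately show False using etaB by simp
    qed
    have big: "\<eta>^4 * real N \<ge> 512"
    proof -
      have "\<delta>^4 \<ge> (X powr (-1/10))^4" using dlow by (intro power_mono) auto
      also have "(X powr (-1/10))^4 = X powr (-2/5)" using Xpos by (simp add: powr_power)
      finally have d4: "\<delta>^4 \<ge> X powr (-2/5)" .
      have "\<delta>^4 * real N \<ge> X powr (-2/5) * (X powr (1/2) / 2)"
        using d4 Nhalf Xpos by (intro mult_mono) (auto simp: powr_half_sqrt)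
      also have "X powr (-2/5) * (X powr (1/2) / 2) = X powr (1/10) / 2"
        using Xpos by (simp add: powr_add[symmetric])
      finally have d4N: "\<delta>^4 * real N \<ge> X powr (1/10) / 2" .
      have "X powr (1/10) \<ge> ((1024 * K^4) powr 10) powr (1/10)"
        using XX0 K4 by (intro powr_mono2) (auto simp: X0_def)
      also have "((1024 * K^4) powr 10) powr (1/10) = 1024 * K^4"
        using K4 by (simp only: powr_powr) simp
      finally have "\<delta>^4 * real N \<ge> 512 * K^4" using d4N by simp
      then show ?thesis using K4 by (simp add: \<eta>_def power_divide field_simps)
    qed
    have Zint: "norm (\<Sum>t\<in>{1..int M}. e (\<theta> * of_int t ^ 2)) = B"
      using BM by (simp add: sum_nat_int Z_def)
    obtain q :: nat where q0: "q > 0" and qb: "real q \<le> 32 / \<eta>^2"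
      and qd: "dist_Z (real q * \<theta>) \<le> 2048 / (\<eta>^4 * of_int (int N) ^ 2)"
      using weyl_core[of "int M" "int N" \<eta> \<theta>] M1 MN eta0 eta1 big etaB Zint by auto
    have lnX: "(ln X)^2 \<ge> 1"
    proof -
      have "exp 1 \<le> X" using exp_le X16 by linarith
      then have "ln X \<ge> 1" using Xpos by (simp add: ln_ge_iff)
      then show ?thesis by (simp add: one_le_power)
    qed
    have dp: "\<delta> powr (-4) = 1 / \<delta>^4" using d0 by (simp add: powr_neg_numeral)
    show "\<exists>q::nat. q > 0 \<and> real q \<le> C * (ln X)^2 * \<delta> powr (-4) \<and>
                dist_Z (real q * \<theta>) \<le> C * (ln X)^2 * \<delta> powr (-4) / X"
    proof (intro exI conjI)
      show "q > 0" by (rule q0)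
      have "real q \<le> 32 * K^2 / \<delta>^2" using qb d0 K4 by (simp add: \<eta>_def power_divide)
      also have "\<dots> \<le> 128 * K^2 / \<delta>^4"
      proof -
        have "\<delta> * \<delta> \<le> 2 * 2" using d2 d0 by (intro mult_mono) auto
        then have dd: "\<delta>^2 \<le> 4" by (simp add: power2_eq_square)
        have "32 * K^2 / \<delta>^2 = (32 * K^2 * \<delta>^2) / \<delta>^4" using d0 by (simp add: field_simps eval_nat_numeral)
        also have "\<dots> \<le> (32 * K^2 * 4) / \<delta>^4" using dd d0 by (intro divide_right_mono mult_left_mono) auto
        finally show ?thesis by simp
      qed
      also have "\<dots> \<le> C / \<delta>^4"
      proof (rule divide_right_mono)
        have "K^2 \<le> K^4" using K4 by (intro power_increasing) auto
        moreover have "K^4 \<ge> 0" by simp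
        ultimately show "128 * K^2 \<le> C" unfolding C_def by linarith
      qed (use d0 in simp)
      also have "\<dots> \<le> C * (ln X)^2 * \<delta> powr (-4)"
      proof -
        have "C / \<delta>^4 = C * 1 * \<delta> powr (-4)" using dp by simp
        also have "\<dots> \<le> C * (ln X)^2 * \<delta> powr (-4)"
          using lnX d0 by (intro mult_right_mono mult_left_mono) (auto simp: C_def)
        finally show ?thesis .
      qed
      finally show "real q \<le> C * (ln X)^2 * \<delta> powr (-4)" .
      have "dist_Z (real q * \<theta>) \<le> 2048 * K^4 / (\<delta>^4 * real N ^ 2)"
        using qd d0 K4 by (simp add: \<eta>_def power_divide)
      also have "\<dots> \<le> 2048 * K^4 / (\<delta>^4 * (X / 4))"
        using NX4 d0 K4 N1 by (intro divide_left_mono mult_left_mono mult_pos_pos) auto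
      also have "\<dots> = C / \<delta>^4 / X" by (simp add: C_def field_simps)
      also have "\<dots> \<le> C * (ln X)^2 * \<delta> powr (-4) / X"
      proof (rule divide_right_mono)
        have "C / \<delta>^4 = C * 1 * \<delta> powr (-4)" using dp by simp
        also have "\<dots> \<le> C * (ln X)^2 * \<delta> powr (-4)"
          using lnX d0 by (intro mult_right_mono mult_left_mono) (auto simp: C_def)
        finally show "C / \<delta>^4 \<le> C * (ln X)^2 * \<delta> powr (-4)" .
      qed simp
      finally show "dist_Z (real q * \<theta>) \<le> C * (ln X)^2 * \<delta> powr (-4) / X" .
    qed
  qed
qed


end
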